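(* Let $(V_1,\dots,V_n)$ be an $n$-tuple of doubly non-commuting isometries on a Hilbert space $H$. For $A\subseteq\{1,\dots,n\}$ put $P_A=\prod_{i\in A}P_i^{\mathrm{iso}}\prod_{i\in A^c}P_i^{\mathrm{uni}}$ and $H_A=P_A(H)$. Then $H_A=\bigcap_{i\in A}H^{\mathrm{iso}}(V_i)\cap\bigcap_{i\in A^c}H^{\mathrm{uni}}(V_i)$, and $H=\bigoplus_{A\subseteq\{1,\dots,n\}}H_A$ is an orthogonal Hilbert direct sum in which every $H_A$ reduces every $V_i$; for all $A$ and $i$, $V_i|_{H_A}$ is a pure isometry if $i\in A$ and unitary if $i\in A^c$. Furthermore, if $L$ is a subspace of $H$ reducing all of $V_1,\dots,V_n$ and $A\subseteq\{1,\dots,n\}$, with $P_L$ the projection onto $L$, the following are equivalent: (1) $V_i|_L$ is a pure isometry for all $i\in A$ and unitary for all $i\in A^c$; (2) $L\subseteq H_A$; (3) $P_LP_A=P_L$.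
   Context: Fix $n\ge1$ and $z_{ij}\in\mathbb T$ ($i\ne j$) with $z_{ji}=\overline{z_{ij}}$; $(V_1,\dots,V_n)$ is doubly non-commuting if the $V_i$ are isometries with $V_i^*V_j=\overline{z_{ij}}V_jV_i^*$ for $i\ne j$. Subspaces are closed, projections orthogonal, $A^c$ is the complement of $A$ in $\{1,\dots,n\}$, empty products are the identity. For an isometry $S$: $H^{\mathrm{iso}}(S)=\bigoplus_{k\ge0}S^k(\ker S^* )$ (orthogonal sum) and $H^{\mathrm{uni}}(S)=\bigcap_{k\ge0}S^k(H)$; $P_i^{\mathrm{iso}},P_i^{\mathrm{uni}}$ are the projections onto $H^{\mathrm{iso}}(V_i),H^{\mathrm{uni}}(V_i)$ (these $2n$ projections commute pairwise, so the order in $P_A$ is irrelevant). For an invariant subspace $L$, $S|_L$ is a pure isometry if $\{0\}$ is the only $S$-invariant subspace of $L$ on which $S$ is unitary. *)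

theory Defs
  imports "HOL-Analysis.Analysis"
begin

class complex_vector = real_vector +
  fixes scaleC :: "complex \<Rightarrow> 'a \<Rightarrow> 'a"  (infixr \<open>*\<^sub>C\<close> 75)
  assumes scaleC_add_right: "a *\<^sub>C (x + y) = a *\<^sub>C x + a *\<^sub>C y"
    and scaleC_add_left: "(a + b) *\<^sub>C x = a *\<^sub>C x + b *\<^sub>C x"
    and scaleC_scaleC: "a *\<^sub>C (b *\<^sub>C x) = (a * b) *\<^sub>C x"
    and scaleC_one: "1 *\<^sub>C x = x"
    and scaleR_scaleC: "scaleR r x = complex_of_real r *\<^sub>C x"

class complex_inner = complex_vector + real_normed_vector +
  fixes cinner :: "'a \<Rightarrow> 'a \<Rightarrow> complex"
  assumes cinner_commute: "cinner x y = cnj (cinner y x)"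
    and cinner_add_left: "cinner (x + y) z = cinner x z + cinner y z"
    and cinner_scaleC_left: "cinner (a *\<^sub>C x) y = cnj a * cinner x y"
    and cinner_pos: "Im (cinner x x) = 0 \<and> Re (cinner x x) \<ge> 0"
    and cinner_eq_zero_iff: "cinner x x = 0 \<longleftrightarrow> x = 0"
    and norm_eq_sqrt_cinner: "norm x = sqrt (Re (cinner x x))"

class chilbert_space = complex_inner + complete_space

definition csubspace :: "'a::complex_vector set \<Rightarrow> bool" where
  "csubspace S \<longleftrightarrow> 0 \<in> S \<and> (\<forall>x\<in>S. \<forall>y\<in>S. x + y \<in> S) \<and> (\<forall>c. \<forall>x\<in>S. c *\<^sub>C x \<in> S)"

text \<open>Subspace = closed linear subspace.\<close>
definition closed_csubspace :: "'a::complex_inner set \<Rightarrow> bool" where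
  "closed_csubspace S \<longleftrightarrow> csubspace S \<and> closed S"

definition cspan :: "'a::complex_vector set \<Rightarrow> 'a set" where
  "cspan X = \<Inter>{S. csubspace S \<and> X \<subseteq> S}"

text \<open>Closed linear span (the Hilbert space sum of a family of subspaces).\<close>
definition ccspan :: "'a::complex_inner set \<Rightarrow> 'a set" where
  "ccspan X = closure (cspan X)"

definition orthogonal_sets :: "'a::complex_inner set \<Rightarrow> 'a set \<Rightarrow> bool" where
  "orthogonal_sets S T \<longleftrightarrow> (\<forall>x\<in>S. \<forall>y\<in>T. cinner x y = 0)"

definition proj :: "'a::complex_inner set \<Rightarrow> 'a \<Rightarrow> 'a" where
  "proj M x = (THE y. y \<in> M \<and> (\<forall>m\<in>M. cinner m (x - y) = 0))"

definition clinear :: "('a::complex_vector \<Rightarrow> 'b::complex_vector) \<Rightarrow> bool" where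
  "clinear f \<longleftrightarrow> (\<forall>x y. f (x + y) = f x + f y) \<and> (\<forall>c x. f (c *\<^sub>C x) = c *\<^sub>C f x)"

definition adj :: "('a::complex_inner \<Rightarrow> 'a) \<Rightarrow> ('a \<Rightarrow> 'a)" where
  "adj T = (SOME S. \<forall>x y. cinner (T x) y = cinner x (S y))"

definition isometry :: "('a::complex_inner \<Rightarrow> 'a) \<Rightarrow> bool" where
  "isometry V \<longleftrightarrow> clinear V \<and> (\<forall>x. norm (V x) = norm x)"

definition ker :: "('a::complex_vector \<Rightarrow> 'a) \<Rightarrow> 'a set" where
  "ker T = {x. T x = 0}"

text \<open>H^iso(S): the orthogonal sum of the S^k(ker S^*), k \<ge> 0, i.e. their closed span.\<close>
definition Hiso :: "('a::complex_inner \<Rightarrow> 'a) \<Rightarrow> 'a set" where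
  "Hiso S = ccspan (\<Union>k. (S ^^ k) ` ker (adj S))"

definition Huni :: "('a::complex_inner \<Rightarrow> 'a) \<Rightarrow> 'a set" where
  "Huni S = (\<Inter>k. range (S ^^ k))"

definition doubly_noncommuting ::
    "nat \<Rightarrow> (nat \<Rightarrow> nat \<Rightarrow> complex) \<Rightarrow> (nat \<Rightarrow> 'a::complex_inner \<Rightarrow> 'a) \<Rightarrow> bool" where
  "doubly_noncommuting n z V \<longleftrightarrow>
     (\<forall>i\<in>{1..n}. isometry (V i)) \<and>
     (\<forall>i\<in>{1..n}. \<forall>j\<in>{1..n}. i \<noteq> j \<longrightarrow>
        (\<forall>x. adj (V i) (V j x) = cnj (z i j) *\<^sub>C V j (adj (V i) x)))"

definition reduces :: "'a set \<Rightarrow> ('a::complex_inner \<Rightarrow> 'a) \<Rightarrow> bool" where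
  "reduces L T \<longleftrightarrow> T ` L \<subseteq> L \<and> adj T ` L \<subseteq> L"

text \<open>The restriction of (an isometry) S to the S-invariant subspace L is unitary: S maps L onto L.\<close>
definition unitary_on :: "('a::complex_inner \<Rightarrow> 'a) \<Rightarrow> 'a set \<Rightarrow> bool" where
  "unitary_on S L \<longleftrightarrow> S ` L = L"

definition pure_on :: "('a::complex_inner \<Rightarrow> 'a) \<Rightarrow> 'a set \<Rightarrow> bool" where
  "pure_on S L \<longleftrightarrow> S ` L \<subseteq> L \<and>
     (\<forall>M. closed_csubspace M \<and> M \<subseteq> L \<and> S ` M \<subseteq> M \<and> unitary_on S M \<longrightarrow> M = {0})"

text \<open>P_A = prod_{i in A} P_i^iso prod_{i in A^c} P_i^uni (complement in {1..n});
  the factors commute, we compose them in the order i = 1, ..., n.\<close>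
definition P_set :: "nat \<Rightarrow> (nat \<Rightarrow> 'a::complex_inner \<Rightarrow> 'a) \<Rightarrow> nat set \<Rightarrow> 'a \<Rightarrow> 'a" where
  "P_set n V A = foldr (\<circ>)
     (map (\<lambda>i. if i \<in> A then proj (Hiso (V i)) else proj (Huni (V i))) [1..<Suc n]) id"

definition H_set :: "nat \<Rightarrow> (nat \<Rightarrow> 'a::complex_inner \<Rightarrow> 'a) \<Rightarrow> nat set \<Rightarrow> 'a set" where
  "H_set n V A = range (P_set n V A)"

end

theory Submission
  imports Defs
begin

lemma scaleC_zero_left[simp]: "0 *\<^sub>C x = (0::'a::complex_vector)"
  by (metis scaleR_scaleC scaleR_zero_left of_real_0)

lemma scaleC_zero_right[simp]: "c *\<^sub>C (0::'a::complex_vector) = 0"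
  by (metis add_cancel_right_right scaleC_add_right add_0)

lemma scaleC_minus_right: "c *\<^sub>C (- x) = - (c *\<^sub>C (x::'a::complex_vector))"
  by (metis add.right_inverse eq_neg_iff_add_eq_0 scaleC_add_right scaleC_zero_right)

lemma scaleC_diff_right: "c *\<^sub>C (x - y) = c *\<^sub>C x - c *\<^sub>C (y::'a::complex_vector)"
  by (metis diff_conv_add_uminus scaleC_add_right scaleC_minus_right)

lemma scaleC_minus_left: "(- c) *\<^sub>C x = - (c *\<^sub>C (x::'a::complex_vector))"
  by (metis add.right_inverse eq_neg_iff_add_eq_0 scaleC_add_left scaleC_zero_left)

lemma scaleC_diff_left: "(c - d) *\<^sub>C x = c *\<^sub>C x - d *\<^sub>C (x::'a::complex_vector)"
  by (metis diff_conv_add_uminus scaleC_add_left scaleC_minus_left)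

lemma scaleC_one'[simp]: "1 *\<^sub>C x = (x::'a::complex_vector)" by (rule scaleC_one)

lemma cinner_add_right: "cinner x (y + z) = cinner x y + cinner x (z::'a::complex_inner)"
  by (metis cinner_add_left cinner_commute complex_cnj_add)

lemma cinner_scaleC_right: "cinner x (c *\<^sub>C y) = c * cinner x (y::'a::complex_inner)"
  by (metis cinner_commute cinner_scaleC_left complex_cnj_cnj complex_cnj_mult)

lemma cinner_zero_left[simp]: "cinner 0 (y::'a::complex_inner) = 0"
  by (metis add_cancel_right_right cinner_add_left add_0)

lemma cinner_zero_right[simp]: "cinner (x::'a::complex_inner) 0 = 0"
  by (metis cinner_commute cinner_zero_left complex_cnj_zero)

lemma cinner_minus_left: "cinner (- x) (y::'a::complex_inner) = - cinner x y"
  by (metis add.right_inverse cinner_add_left cinner_zero_left eq_neg_iff_add_eq_0)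

lemma cinner_minus_right: "cinner x (- y) = - cinner x (y::'a::complex_inner)"
  by (metis add.right_inverse cinner_add_right cinner_zero_right eq_neg_iff_add_eq_0)

lemma cinner_diff_left: "cinner (x - y) (z::'a::complex_inner) = cinner x z - cinner y z"
  by (metis cinner_add_left cinner_minus_left diff_conv_add_uminus)

lemma cinner_diff_right: "cinner x (y - z) = cinner x y - cinner x (z::'a::complex_inner)"
  by (metis cinner_add_right cinner_minus_right diff_conv_add_uminus)

lemmas cinner_simps = cinner_add_left cinner_add_right cinner_diff_left cinner_diff_right
  cinner_minus_left cinner_minus_right cinner_scaleC_left cinner_scaleC_right

lemma Re_cinner_self: "Re (cinner x (x::'a::complex_inner)) = (norm x)^2"
  by (simp add: norm_eq_sqrt_cinner cinner_pos)

lemma cinner_self: "cinner x (x::'a::complex_inner) = complex_of_real ((norm x)^2)"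
  by (rule complex_eqI) (simp_all add: Re_cinner_self cinner_pos)

lemma norm_scaleC: "norm (c *\<^sub>C x) = cmod c * norm (x::'a::complex_inner)"
proof -
  have "(norm (c *\<^sub>C x))^2 = (cmod c * norm x)^2"
  proof -
    have "complex_of_real ((norm (c *\<^sub>C x))^2) = cnj c * c * complex_of_real ((norm x)^2)"
      by (metis cinner_self cinner_scaleC_left cinner_scaleC_right mult.assoc)
    also have "cnj c * c = complex_of_real ((cmod c)^2)"
      by (metis complex_norm_square mult.commute)
    finally show ?thesis by (metis of_real_eq_iff of_real_mult power_mult_distrib)
  qed
  then show ?thesis by (rule power2_eq_imp_eq) auto
qed

lemma cinner_self_eq_0[simp]: "cinner x x = 0 \<longleftrightarrow> x = (0::'a::complex_inner)"
  by (rule cinner_eq_zero_iff)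

lemma cinner_cnj: "cnj (cinner x y) = cinner y (x::'a::complex_inner)"
  by (metis cinner_commute)

lemma norm_add_sq: "(norm (x + y))^2 = (norm x)^2 + (norm y)^2 + 2 * Re (cinner x (y::'a::complex_inner))"
proof -
  have "(norm (x + y))^2 = Re (cinner x x + cinner x y + cinner y x + cinner y y)"
    by (simp add: Re_cinner_self[symmetric] cinner_simps)
  also have "Re (cinner y x) = Re (cinner x y)" by (subst cinner_commute) simp
  then show ?thesis using calculation by (simp add: Re_cinner_self)
qed

lemma norm_diff_sq: "(norm (x - y))^2 = (norm x)^2 + (norm y)^2 - 2 * Re (cinner x (y::'a::complex_inner))"
  using norm_add_sq[of x "-y"] by (simp add: cinner_minus_right)

definition orth :: "'a::complex_inner set \<Rightarrow> 'a set" where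
  "orth M = {x. \<forall>m\<in>M. cinner m x = 0}"

lemma norm_sub_proj_sq:
  fixes x y :: "'a::complex_inner"
  assumes "y \<noteq> 0"
  shows "(norm (x - (cinner y x / cinner y y) *\<^sub>C y))^2 = (norm x)^2 - (cmod (cinner y x))^2 / (norm y)^2"
proof -
  define a where "a = cinner y x"
  define N where "N = (norm y)^2"
  have N0: "N > 0" using assms by (simp add: N_def)
  have yy: "cinner y y = of_real N" by (simp add: N_def cinner_self)
  have xy: "cinner x y = cnj a" by (simp add: a_def cinner_cnj)
  define c where "c = a / of_real N"
  have "cinner (x - c *\<^sub>C y) (x - c *\<^sub>C y) = cinner x x - c * cinner x y - cnj c * cinner y x + cnj c * c * cinner y y"
    by (simp add: cinner_diff_left cinner_diff_right cinner_scaleC_left cinner_scaleC_right algebra_simps)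
  also have "\<dots> = cinner x x - c * cnj a - cnj c * a + cnj c * c * of_real N"
    using yy xy a_def by simp
  also have "\<dots> = cinner x x - (a * cnj a) / of_real N"
    using N0 by (simp add: c_def field_simps)
  also have "a * cnj a = of_real ((cmod a)^2)" by (metis complex_norm_square)
  finally have "cinner (x - c *\<^sub>C y) (x - c *\<^sub>C y) = cinner x x - of_real ((cmod a)^2 / N)"
    by simp
  then have "Re (cinner (x - c *\<^sub>C y) (x - c *\<^sub>C y)) = (norm x)^2 - (cmod a)^2 / N"
    by (simp add: Re_cinner_self)
  then show ?thesis by (simp add: Re_cinner_self c_def a_def N_def yy)
qed

lemma cauchy_schwarz: "cmod (cinner x y) \<le> norm x * norm (y::'a::complex_inner)"
proof (cases "x = 0")
  case True then show ?thesis by simp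
next
  case False
  have "0 \<le> (norm y)^2 - (cmod (cinner x y))^2 / (norm x)^2"
    using norm_sub_proj_sq[OF False, of y] by (metis zero_le_power2)
  then have "(cmod (cinner x y))^2 / (norm x)^2 \<le> (norm y)^2" by simp
  then have "(cmod (cinner x y))^2 \<le> (norm y)^2 * (norm x)^2"
    using False by (simp add: divide_le_eq)
  then have "(cmod (cinner x y))^2 \<le> (norm x * norm y)^2" by (simp add: power_mult_distrib mult.commute)
  then show ?thesis by (rule power2_le_imp_le) simp
qed

lemma bounded_linear_cinner_right: "bounded_linear (\<lambda>y. cinner (m::'a::complex_inner) y)"
proof (rule bounded_linear_intro[where K = "norm m"])
  show "cinner m (x + y) = cinner m x + cinner m y" for x y by (rule cinner_add_right)
  show "cinner m (r *\<^sub>R x) = r *\<^sub>R cinner m x" for r x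
    by (simp add: scaleR_scaleC cinner_scaleC_right scaleR_conv_of_real)
  show "norm (cinner m x) \<le> norm x * norm m" for x
    using cauchy_schwarz[of m x] by (simp add: mult.commute)
qed

lemma continuous_cinner_right: "continuous_on S (\<lambda>y. cinner (m::'a::complex_inner) y)"
  by (rule linear_continuous_on[OF bounded_linear_cinner_right])

lemma bounded_linear_scaleC: "bounded_linear (\<lambda>x. c *\<^sub>C (x::'a::complex_inner))"
proof (rule bounded_linear_intro[where K = "cmod c"])
  show "c *\<^sub>C (x + y) = c *\<^sub>C x + c *\<^sub>C y" for x y by (rule scaleC_add_right)
  show "c *\<^sub>C (r *\<^sub>R x) = r *\<^sub>R (c *\<^sub>C x)" for r x
    by (simp add: scaleR_scaleC scaleC_scaleC mult.commute)
  show "norm (c *\<^sub>C x) \<le> norm x * cmod c" for x :: 'a by (simp add: norm_scaleC mult.commute)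
qed

lemma csubspace_0: "csubspace S \<Longrightarrow> 0 \<in> S" by (simp add: csubspace_def)
lemma csubspace_add: "csubspace S \<Longrightarrow> x \<in> S \<Longrightarrow> y \<in> S \<Longrightarrow> x + y \<in> S" by (simp add: csubspace_def)
lemma csubspace_scaleC: "csubspace S \<Longrightarrow> x \<in> S \<Longrightarrow> c *\<^sub>C x \<in> S" by (simp add: csubspace_def)
lemma csubspace_neg: "csubspace S \<Longrightarrow> x \<in> S \<Longrightarrow> - x \<in> (S::'a::complex_vector set)"
  by (metis csubspace_scaleC scaleC_minus_left scaleC_one)
lemma csubspace_diff: "csubspace S \<Longrightarrow> x \<in> S \<Longrightarrow> y \<in> S \<Longrightarrow> x - y \<in> (S::'a::complex_vector set)"
  by (metis csubspace_add csubspace_neg diff_conv_add_uminus)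
lemma csubspace_scaleR: "csubspace S \<Longrightarrow> x \<in> S \<Longrightarrow> r *\<^sub>R x \<in> (S::'a::complex_vector set)"
  by (simp add: csubspace_scaleC scaleR_scaleC)

lemma closed_csubspace_csubspace: "closed_csubspace S \<Longrightarrow> csubspace S" by (simp add: closed_csubspace_def)
lemma closed_csubspace_closed: "closed_csubspace S \<Longrightarrow> closed S" by (simp add: closed_csubspace_def)

lemma closed_csubspace_orth: "closed_csubspace (orth (M::'a::complex_inner set))"
proof -
  have cs: "csubspace (orth M)"
    by (auto simp: csubspace_def orth_def cinner_add_right cinner_scaleC_right)
  have "orth M = (\<Inter>m\<in>M. {x. cinner m x = 0})" by (auto simp: orth_def)
  moreover have "closed {x. cinner m x = 0}" for m
    by (rule closed_Collect_eq[OF continuous_cinner_right continuous_on_const])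
  ultimately have "closed (orth M)" by auto
  with cs show ?thesis by (simp add: closed_csubspace_def)
qed

lemma proj_exists:
  fixes M :: "'a::chilbert_space set" and x :: 'a
  assumes M: "closed_csubspace M"
  shows "\<exists>y\<in>M. \<forall>m\<in>M. cinner m (x - y) = 0"
proof -
  have cs: "csubspace M" and cl: "closed M" using M by (auto simp: closed_csubspace_def)
  define D where "D = (\<lambda>m. norm (x - m)) ` M"
  define d where "d = Inf D"
  have ne: "D \<noteq> {}" using csubspace_0[OF cs] by (auto simp: D_def)
  have bdd: "bdd_below D" by (auto simp: D_def intro!: bdd_belowI[where m=0])
  have dle: "d \<le> norm (x - m)" if "m \<in> M" for m
    unfolding d_def using bdd that by (auto simp: D_def intro!: cInf_lower)
  have d0: "0 \<le> d" unfolding d_def using ne by (auto simp: D_def intro!: cInf_greatest)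
  have ex: "\<exists>m\<in>M. (norm (x - m))^2 < d^2 + inverse (real (Suc k))" for k
  proof -
    have pos: "0 < inverse (real (Suc k))" by simp
    have "d^2 < d^2 + inverse (real (Suc k))" using pos by simp
    then have "d < sqrt (d^2 + inverse (real (Suc k)))" by (rule real_less_rsqrt)
    then obtain t where t: "t \<in> D" "t < sqrt (d^2 + inverse (real (Suc k)))"
      using cInf_lessD[OF ne] unfolding d_def by blast
    then obtain m where m: "m \<in> M" "t = norm (x - m)" by (auto simp: D_def)
    have "t^2 < (sqrt (d^2 + inverse (real (Suc k))))^2"
      using t(2) m(2) by (intro power_strict_mono) auto
    also have "\<dots> = d^2 + inverse (real (Suc k))" using pos by (intro real_sqrt_pow2) simp
    finally show ?thesis using m by blast
  qed
  then obtain ms where ms: "\<And>k. ms k \<in> M" "\<And>k. (norm (x - ms k))^2 < d^2 + inverse (real (Suc k))"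
    by metis
  have mid: "(norm (ms j - ms k))^2 \<le> 2 * inverse (real (Suc j)) + 2 * inverse (real (Suc k))" for j k
  proof -
    define a where "a = x - ms j"
    define b where "b = x - ms k"
    have par: "(norm (a + b))^2 + (norm (a - b))^2 = 2*(norm a)^2 + 2*(norm b)^2"
      using norm_add_sq[of a b] norm_diff_sq[of a b] by simp
    define c where "c = (1/2) *\<^sub>R (ms j + ms k)"
    have cM: "c \<in> M" unfolding c_def by (intro csubspace_scaleR csubspace_add cs ms)
    have "a + b = 2 *\<^sub>R (x - c)" by (simp add: a_def b_def c_def algebra_simps scaleR_2)
    then have "norm (a + b) = 2 * norm (x - c)" by simp
    moreover have "d \<le> norm (x - c)" using dle cM by blast
    ultimately have "2 * d \<le> norm (a + b)" by simp
    then have "(2 * d)^2 \<le> (norm (a + b))^2" using d0 by (intro power_mono) auto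
    then have ab: "4 * d^2 \<le> (norm (a + b))^2" by (simp add: power_mult_distrib)
    have "a - b = ms k - ms j" by (simp add: a_def b_def)
    then have "norm (a - b) = norm (ms j - ms k)" by (simp add: norm_minus_commute)
    with par ab ms(2)[of j] ms(2)[of k] show ?thesis by (simp add: a_def b_def)
  qed
  have "Cauchy ms"
  proof (rule CauchyI)
    fix e :: real assume e: "0 < e"
    obtain N :: nat where N: "4 / e^2 < real N" using reals_Archimedean2 by blast
    have "\<forall>j\<ge>N. \<forall>k\<ge>N. norm (ms j - ms k) < e"
    proof (intro allI impI)
      fix j k assume jk: "N \<le> j" "N \<le> k"
      have e2: "0 < e^2" using e by simp
      have NS: "4 / e^2 < real (Suc N)" using N by simp
      have "inverse (real (Suc j)) \<le> inverse (real (Suc N))" using jk by (simp add: field_simps)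
      moreover have "inverse (real (Suc k)) \<le> inverse (real (Suc N))" using jk by (simp add: field_simps)
      ultimately have "(norm (ms j - ms k))^2 \<le> 4 * inverse (real (Suc N))" using mid[of j k] by linarith
      also have "4 * inverse (real (Suc N)) < e^2"
        using NS e2 by (simp add: field_simps)
      finally have "(norm (ms j - ms k))^2 < e^2" .
      then show "norm (ms j - ms k) < e" using e by (simp add: power_less_imp_less_base)
    qed
    then show "\<exists>M. \<forall>m\<ge>M. \<forall>n\<ge>M. norm (ms m - ms n) < e" by blast
  qed
  then obtain y where y: "ms \<longlonglongrightarrow> y" using Cauchy_convergent_iff convergent_def by blast
  have yM: "y \<in> M" using closed_sequentially[OF cl ms(1) y] .
  have lim1: "(\<lambda>k. (norm (x - ms k))^2) \<longlonglongrightarrow> (norm (x - y))^2"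
    by (intro tendsto_intros y)
  have lim2: "(\<lambda>k. d^2 + inverse (real (Suc k))) \<longlonglongrightarrow> d^2 + 0"
    by (intro tendsto_intros LIMSEQ_inverse_real_of_nat)
  have yd: "(norm (x - y))^2 \<le> d^2"
  proof -
    have "\<forall>\<^sub>F k in sequentially. (norm (x - ms k))^2 \<le> d^2 + inverse (real (Suc k))"
      using ms(2) less_imp_le by (intro always_eventually) blast
    from tendsto_le[OF trivial_limit_sequentially lim2 lim1 this] show ?thesis by simp
  qed
  show ?thesis
  proof (intro bexI[OF _ yM] ballI)
    fix m assume mM: "m \<in> M"
    show "cinner m (x - y) = 0"
    proof (cases "m = 0")
      case True then show ?thesis by simp
    next
      case False
      define w where "w = x - y"
      define c where "c = cinner m w / cinner m m"
      have "y + c *\<^sub>C m \<in> M" by (intro csubspace_add csubspace_scaleC cs yM mM)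
      then have "d \<le> norm (x - (y + c *\<^sub>C m))" using dle by blast
      then have "d^2 \<le> (norm (x - (y + c *\<^sub>C m)))^2" using d0 by (intro power_mono) auto
      also have "x - (y + c *\<^sub>C m) = w - c *\<^sub>C m" by (simp add: w_def)
      also have "(norm (w - c *\<^sub>C m))^2 = (norm w)^2 - (cmod (cinner m w))^2 / (norm m)^2"
        unfolding c_def by (rule norm_sub_proj_sq[OF False])
      finally have "(cmod (cinner m w))^2 / (norm m)^2 \<le> 0" using yd w_def by simp
      moreover have "0 < (norm m)^2" using False by simp
      ultimately have "(cmod (cinner m w))^2 \<le> 0" by (simp add: divide_le_0_iff)
      then show ?thesis by (simp add: w_def)
    qed
  qed
qed

section \<open>Projections\<close>

lemma orth_unique:
  assumes cs: "csubspace M" and y: "y \<in> M" "\<forall>m\<in>M. cinner m (x - y) = 0"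
    and y': "y' \<in> M" "\<forall>m\<in>M. cinner m (x - y') = 0"
  shows "y' = (y::'a::complex_inner)"
proof -
  have d: "y - y' \<in> M" by (rule csubspace_diff[OF cs y(1) y'(1)])
  have "cinner (y - y') (y - y') = cinner (y - y') (x - y') - cinner (y - y') (x - y)"
    by (simp add: cinner_diff_right)
  also have "\<dots> = 0" using d y y' by simp
  finally show ?thesis by simp
qed

context
  fixes M :: "'a::chilbert_space set"
  assumes M: "closed_csubspace M"
begin

private lemma csM: "csubspace M" using M by (simp add: closed_csubspace_def)

lemma proj_unique: "y \<in> M \<Longrightarrow> (\<forall>m\<in>M. cinner m (x - y) = 0) \<Longrightarrow> proj M x = y"
  unfolding proj_def by (rule the_equality) (auto intro: orth_unique[OF csM])

lemma proj_props: "proj M x \<in> M \<and> (\<forall>m\<in>M. cinner m (x - proj M x) = 0)"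
proof -
  obtain y where "y \<in> M" "\<forall>m\<in>M. cinner m (x - y) = 0" using proj_exists[OF M] by blast
  moreover then have "proj M x = y" by (rule proj_unique)
  ultimately show ?thesis by simp
qed

lemma proj_in: "proj M x \<in> M" using proj_props by blast
lemma proj_orth: "m \<in> M \<Longrightarrow> cinner m (x - proj M x) = 0" using proj_props by blast

lemma proj_fixed: "m \<in> M \<Longrightarrow> proj M m = m"
  by (rule proj_unique) auto

lemma proj_idem: "proj M (proj M x) = proj M x"
  by (rule proj_fixed[OF proj_in])

lemma proj_orth_zero: "x \<in> orth M \<Longrightarrow> proj M x = 0"
  by (rule proj_unique) (auto simp: orth_def csubspace_0[OF csM])

lemma proj_add: "proj M (x + y) = proj M x + proj M y"
proof (rule proj_unique)
  show "proj M x + proj M y \<in> M" by (intro csubspace_add csM proj_in)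
  show "\<forall>m\<in>M. cinner m (x + y - (proj M x + proj M y)) = 0"
  proof
    fix m assume m: "m \<in> M"
    have e: "x + y - (proj M x + proj M y) = (x - proj M x) + (y - proj M y)" by (simp add: algebra_simps)
    show "cinner m (x + y - (proj M x + proj M y)) = 0"
      unfolding e cinner_add_right using proj_orth[OF m, of x] proj_orth[OF m, of y] by simp
  qed
qed

lemma proj_scaleC: "proj M (c *\<^sub>C x) = c *\<^sub>C proj M x"
proof (rule proj_unique)
  show "c *\<^sub>C proj M x \<in> M" by (intro csubspace_scaleC csM proj_in)
  show "\<forall>m\<in>M. cinner m (c *\<^sub>C x - c *\<^sub>C proj M x) = 0"
    using proj_orth by (simp add: scaleC_diff_right[symmetric] cinner_scaleC_right)
qed

lemma proj_diff: "proj M (x - y) = proj M x - proj M y"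
proof -
  have "proj M (x - y) + proj M y = proj M x" by (metis proj_add diff_add_cancel)
  then show ?thesis by (simp add: eq_diff_eq)
qed

lemma clinear_proj: "clinear (proj M)"
  by (simp add: clinear_def proj_add proj_scaleC)

lemma proj_selfadj: "cinner (proj M x) y = cinner x (proj M y)"
proof -
  have 1: "cinner (proj M x) y = cinner (proj M x) (proj M y)"
    using proj_orth[OF proj_in, of x y] by (simp add: cinner_diff_right)
  have "cinner (proj M y) (x - proj M x) = 0" by (rule proj_orth[OF proj_in])
  then have "cinner (x - proj M x) (proj M y) = 0" by (metis cinner_cnj complex_cnj_zero)
  then have 2: "cinner x (proj M y) = cinner (proj M x) (proj M y)" by (simp add: cinner_diff_left)
  show ?thesis using 1 2 by simp
qed

lemma proj_orth_in: "x - proj M x \<in> orth M"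
  using proj_orth by (simp add: orth_def)

lemma orth_orth: "orth (orth M) = M"
proof
  show "M \<subseteq> orth (orth M)"
    by (auto simp: orth_def) (metis cinner_cnj complex_cnj_zero)
  show "orth (orth M) \<subseteq> M"
  proof
    fix y assume y: "y \<in> orth (orth M)"
    define w where "w = y - proj M y"
    have w: "w \<in> orth M" unfolding w_def by (rule proj_orth_in)
    have 1: "cinner w y = 0" using y w by (simp add: orth_def)
    have "cinner (proj M y) w = 0" using w proj_in by (simp add: orth_def)
    then have 2: "cinner w (proj M y) = 0" by (metis cinner_cnj complex_cnj_zero)
    have "cinner w w = cinner w y - cinner w (proj M y)"
      by (subst (2) w_def) (simp add: cinner_diff_right)
    then have "cinner w w = 0" using 1 2 by simp
    then have "w = 0" by simp
    then show "y \<in> M" using proj_in[of y] by (simp add: w_def)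
  qed
qed

lemma range_proj: "range (proj M) = M"
  using proj_in proj_fixed by (metis image_subsetI subsetI subset_antisym rangeI)

end

lemma proj_orth_complement:
  fixes M :: "'a::chilbert_space set"
  assumes M: "closed_csubspace M"
  shows "proj (orth M) x = x - proj M x"
proof -
  have "closed_csubspace (orth M)" by (rule closed_csubspace_orth)
  have "proj M x \<in> orth (orth M)" using orth_orth[OF M] proj_in[OF M] by simp
  then have "\<forall>m\<in>orth M. cinner m (x - (x - proj M x)) = 0" by (simp add: orth_def)
  moreover have "x - proj M x \<in> orth M" by (rule proj_orth_in[OF M])
  ultimately show ?thesis
    by (intro proj_unique[OF closed_csubspace_orth]) auto
qed

lemma orth_inter_zero: "x \<in> M \<Longrightarrow> x \<in> orth M \<Longrightarrow> x = (0::'a::complex_inner)"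
proof -
  assume "x \<in> M" "x \<in> orth M"
  then have "cinner x x = 0" by (simp add: orth_def)
  then show ?thesis by simp
qed

lemma proj_UNIV: "proj UNIV x = (x::'a::chilbert_space)"
proof -
  have "closed_csubspace (UNIV::'a set)" by (simp add: closed_csubspace_def csubspace_def)
  then show ?thesis by (rule proj_fixed) simp
qed

lemma proj_subset_iff:
  fixes L N :: "'a::chilbert_space set"
  assumes L: "closed_csubspace L" and N: "closed_csubspace N"
  shows "L \<subseteq> N \<longleftrightarrow> proj L \<circ> proj N = proj L"
proof
  assume LN: "L \<subseteq> N"
  show "proj L \<circ> proj N = proj L"
  proof
    fix x
    have "proj L (proj N x) = proj L x"
    proof (rule proj_unique[OF L])
      show "proj L x \<in> L" by (rule proj_in[OF L])
      show "\<forall>m\<in>L. cinner m (proj N x - proj L x) = 0"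
      proof
        fix m assume m: "m \<in> L"
        have "proj N x - proj L x = (x - proj L x) - (x - proj N x)" by simp
        then show "cinner m (proj N x - proj L x) = 0"
          using proj_orth[OF L m] proj_orth[OF N, of m x] m LN by (auto simp: cinner_diff_right)
      qed
    qed
    then show "(proj L \<circ> proj N) x = proj L x" by simp
  qed
next
  assume eq: "proj L \<circ> proj N = proj L"
  show "L \<subseteq> N"
  proof
    fix l assume l: "l \<in> L"
    define w where "w = l - proj N l"
    have "proj L w = proj L l - proj L (proj N l)" unfolding w_def by (rule proj_diff[OF L])
    also have "proj L (proj N l) = proj L l" using eq by (metis comp_apply)
    finally have "proj L w = 0" by simp
    then have "cinner l w = 0" using proj_orth[OF L l, of w] by simp
    then have 1: "cinner w l = 0" by (metis cinner_cnj complex_cnj_zero)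
    have "cinner (proj N l) w = 0" unfolding w_def by (rule proj_orth[OF N proj_in[OF N]])
    then have 2: "cinner w (proj N l) = 0" by (metis cinner_cnj complex_cnj_zero)
    have "cinner w w = cinner w l - cinner w (proj N l)" by (simp add: w_def cinner_diff_right)
    then have "w = 0" using 1 2 by simp
    then show "l \<in> N" using proj_in[OF N, of l] by (simp add: w_def)
  qed
qed

lemma proj_commute_if_invariant:
  fixes M N :: "'a::chilbert_space set"
  assumes M: "closed_csubspace M" and N: "closed_csubspace N" and inv: "\<And>m. m \<in> M \<Longrightarrow> proj N m \<in> M"
  shows "proj M (proj N x) = proj N (proj M x)"
proof -
  have orthinv: "proj N y \<in> orth M" if y: "y \<in> orth M" for y
  proof -
    have "cinner m (proj N y) = 0" if m: "m \<in> M" for m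
    proof -
      have "cinner m (proj N y) = cinner (proj N m) y" by (simp add: proj_selfadj[OF N])
      also have "\<dots> = 0" using y inv[OF m] by (simp add: orth_def)
      finally show ?thesis .
    qed
    then show ?thesis by (simp add: orth_def)
  qed
  have "proj N x = proj N (proj M x) + proj N (x - proj M x)"
    by (simp add: proj_add[OF N, symmetric])
  then have "proj M (proj N x) = proj M (proj N (proj M x)) + proj M (proj N (x - proj M x))"
    by (simp add: proj_add[OF M])
  also have "proj M (proj N (proj M x)) = proj N (proj M x)"
    by (rule proj_fixed[OF M inv[OF proj_in[OF M]]])
  also have "proj M (proj N (x - proj M x)) = 0"
    by (rule proj_orth_zero[OF M orthinv[OF proj_orth_in[OF M]]])
  finally show ?thesis by simp
qed

lemma cspan_superset: "X \<subseteq> cspan X" by (auto simp: cspan_def)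

lemma csubspace_cspan: "csubspace (cspan X)"
  by (auto simp: cspan_def csubspace_def)

lemma cspan_minimal: "csubspace S \<Longrightarrow> X \<subseteq> S \<Longrightarrow> cspan X \<subseteq> S"
  by (auto simp: cspan_def)

lemma cspan_mono: "X \<subseteq> Y \<Longrightarrow> cspan X \<subseteq> cspan Y"
  by (meson cspan_minimal cspan_superset csubspace_cspan order_trans)

lemma clinear_zero: "clinear f \<Longrightarrow> f 0 = 0"
  by (metis clinear_def scaleC_zero_left)

lemma clinear_add: "clinear f \<Longrightarrow> f (x + y) = f x + f y" by (simp add: clinear_def)
lemma clinear_scaleC: "clinear f \<Longrightarrow> f (c *\<^sub>C x) = c *\<^sub>C f x" by (simp add: clinear_def)
lemma clinear_minus: "clinear f \<Longrightarrow> f (- x) = - f (x::'a::complex_vector)"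
  by (metis clinear_scaleC scaleC_minus_left scaleC_one)
lemma clinear_diff: "clinear f \<Longrightarrow> f (x - y) = f x - f (y::'a::complex_vector)"
proof -
  assume f: "clinear f"
  have "f (x - y) + f y = f x" using clinear_add[OF f, of "x - y" y] by simp
  then show ?thesis by (simp add: eq_diff_eq)
qed

lemma clinear_image_cspan:
  assumes f: "clinear f" shows "f ` cspan X \<subseteq> cspan (f ` X)"
proof -
  have "csubspace {x. f x \<in> cspan (f ` X)}"
    using f csubspace_cspan[of "f ` X"]
    by (auto simp: csubspace_def clinear_zero clinear_add clinear_scaleC)
  moreover have "X \<subseteq> {x. f x \<in> cspan (f ` X)}" using cspan_superset[of "f ` X"] by auto
  ultimately have "cspan X \<subseteq> {x. f x \<in> cspan (f ` X)}" by (rule cspan_minimal)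
  then show ?thesis by auto
qed

lemma csubspace_closure:
  assumes S: "csubspace (S::'a::complex_inner set)" shows "csubspace (closure S)"
  unfolding csubspace_def
proof (intro conjI ballI allI)
  show "0 \<in> closure S" using csubspace_0[OF S] closure_subset by blast
  fix x y assume x: "x \<in> closure S" and y: "y \<in> closure S"
  obtain u where u: "\<forall>n. u n \<in> S" "u \<longlonglongrightarrow> x" using x closure_sequential by blast
  obtain v where v: "\<forall>n. v n \<in> S" "v \<longlonglongrightarrow> y" using y closure_sequential by blast
  have "(\<lambda>n. u n + v n) \<longlonglongrightarrow> x + y" by (intro tendsto_add u v)
  moreover have "\<forall>n. u n + v n \<in> S" using u v csubspace_add[OF S] by blast
  ultimately show "x + y \<in> closure S" unfolding closure_sequential
    by (rule_tac x="\<lambda>n. u n + v n" in exI) simp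
next
  fix c and x assume x: "x \<in> closure S"
  obtain u where u: "\<forall>n. u n \<in> S" "u \<longlonglongrightarrow> x" using x closure_sequential by blast
  have "(\<lambda>n. c *\<^sub>C u n) \<longlonglongrightarrow> c *\<^sub>C x" by (rule bounded_linear.tendsto[OF bounded_linear_scaleC u(2)])
  moreover have "\<forall>n. c *\<^sub>C u n \<in> S" using u csubspace_scaleC[OF S] by blast
  ultimately show "c *\<^sub>C x \<in> closure S" unfolding closure_sequential
    by (rule_tac x="\<lambda>n. c *\<^sub>C u n" in exI) simp
qed

lemma closed_csubspace_ccspan: "closed_csubspace (ccspan (X::'a::complex_inner set))"
  by (simp add: closed_csubspace_def ccspan_def csubspace_closure csubspace_cspan)

lemma ccspan_superset: "X \<subseteq> ccspan X"
  unfolding ccspan_def using cspan_superset closure_subset by blast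

lemma ccspan_minimal: "closed_csubspace S \<Longrightarrow> X \<subseteq> S \<Longrightarrow> ccspan X \<subseteq> S"
  unfolding ccspan_def closed_csubspace_def by (meson closure_minimal cspan_minimal)

lemma orth_ccspan:
  assumes "x \<in> orth X" and "m \<in> ccspan X" shows "cinner m (x::'a::complex_inner) = 0"
proof -
  have "X \<subseteq> orth {x}" using assms(1) by (auto simp: orth_def) (metis cinner_cnj complex_cnj_zero)
  then have "ccspan X \<subseteq> orth {x}" by (rule ccspan_minimal[OF closed_csubspace_orth])
  then have "cinner x m = 0" using assms(2) by (auto simp: orth_def)
  then show ?thesis by (metis cinner_cnj complex_cnj_zero)
qed

lemma closed_csubspace_Inter:
  assumes "\<And>i. i \<in> I \<Longrightarrow> closed_csubspace (M i)"
  shows "closed_csubspace (\<Inter>i\<in>I. M i)"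
  using assms unfolding closed_csubspace_def csubspace_def by (auto intro!: closed_INT)

lemma closed_csubspace_Int:
  "closed_csubspace A \<Longrightarrow> closed_csubspace B \<Longrightarrow> closed_csubspace (A \<inter> B)"
  unfolding closed_csubspace_def csubspace_def by auto

lemma closed_csubspace_UNIV: "closed_csubspace UNIV"
  by (simp add: closed_csubspace_def csubspace_def)

lemma isometry_clinear: "isometry V \<Longrightarrow> clinear V" by (simp add: isometry_def)
lemma isometry_norm: "isometry V \<Longrightarrow> norm (V x) = norm x" by (simp add: isometry_def)

lemma isometry_Re_cinner:
  assumes V: "isometry V" shows "Re (cinner (V x) (V y)) = Re (cinner x y)"
proof -
  have "(norm (V (x + y)))^2 = (norm (x + y))^2" using isometry_norm[OF V] by simp
  then have "(norm (V x + V y))^2 = (norm (x + y))^2" using clinear_add[OF isometry_clinear[OF V]] by simp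
  then show ?thesis unfolding norm_add_sq using isometry_norm[OF V] by simp
qed

lemma isometry_cinner:
  assumes V: "isometry V" shows "cinner (V x) (V y) = cinner x y"
proof (rule complex_eqI)
  show "Re (cinner (V x) (V y)) = Re (cinner x y)" by (rule isometry_Re_cinner[OF V])
  have "Re (cinner (V (\<i> *\<^sub>C x)) (V y)) = Re (cinner (\<i> *\<^sub>C x) y)" by (rule isometry_Re_cinner[OF V])
  then show "Im (cinner (V x) (V y)) = Im (cinner x y)"
    using clinear_scaleC[OF isometry_clinear[OF V]] by (simp add: cinner_scaleC_left)
qed

lemma isometry_comp: "isometry V \<Longrightarrow> isometry W \<Longrightarrow> isometry (V \<circ> W)"
  by (simp add: isometry_def clinear_def)

lemma isometry_id: "isometry id"
  by (simp add: isometry_def clinear_def)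

lemma isometry_funpow: "isometry V \<Longrightarrow> isometry (V ^^ k)"
  by (induction k) (simp_all add: isometry_id isometry_comp)

lemma bounded_linear_isometry: "isometry V \<Longrightarrow> bounded_linear V"
  by (rule bounded_linear_intro[where K = 1])
    (simp_all add: clinear_add isometry_clinear isometry_norm scaleR_scaleC clinear_scaleC)

lemma csubspace_range: "clinear f \<Longrightarrow> csubspace (range f)"
  unfolding csubspace_def
proof (intro conjI ballI allI)
  assume f: "clinear f"
  show "0 \<in> range f" using clinear_zero[OF f] by (metis rangeI)
  fix x y assume "x \<in> range f" "y \<in> range f"
  then obtain a b where "x = f a" "y = f b" by blast
  then have "x + y = f (a + b)" by (simp add: clinear_add[OF f])
  then show "x + y \<in> range f" by simp
next
  fix c x assume f: "clinear f" and "x \<in> range f"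
  then obtain a where "x = f a" by blast
  then have "c *\<^sub>C x = f (c *\<^sub>C a)" by (simp add: clinear_scaleC[OF f])
  then show "c *\<^sub>C x \<in> range f" by simp
qed

lemma closed_range_isometry:
  fixes V :: "'a::chilbert_space \<Rightarrow> 'a"
  assumes V: "isometry V" shows "closed (range V)"
  unfolding closed_sequential_limits
proof (intro allI impI, elim conjE)
  fix w l assume w: "\<forall>n. w n \<in> range V" and l: "w \<longlonglongrightarrow> l"
  define u where "u n = inv V (w n)" for n
  have u: "w n = V (u n)" for n using f_inv_into_f[of "w n" V UNIV] w unfolding u_def by simp
  have "Cauchy w" using l by (rule LIMSEQ_imp_Cauchy)
  moreover have "norm (w m - w n) = norm (u m - u n)" for m n
    using u clinear_diff[OF isometry_clinear[OF V], of "u m" "u n"] isometry_norm[OF V, of "u m - u n"]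
    by simp
  ultimately have "Cauchy u" unfolding Cauchy_iff by simp
  then obtain x where x: "u \<longlonglongrightarrow> x" using Cauchy_convergent_iff convergent_def by blast
  have "(\<lambda>n. V (u n)) \<longlonglongrightarrow> V x" by (rule bounded_linear.tendsto[OF bounded_linear_isometry[OF V] x])
  moreover have "w = (\<lambda>n. V (u n))" using u by auto
  ultimately have "w \<longlonglongrightarrow> V x" by simp
  then have "l = V x" using l LIMSEQ_unique by blast
  then show "l \<in> range V" by simp
qed

lemma closed_csubspace_range_isometry:
  fixes V :: "'a::chilbert_space \<Rightarrow> 'a"
  shows "isometry V \<Longrightarrow> closed_csubspace (range V)"
  by (simp add: closed_csubspace_def closed_range_isometry csubspace_range isometry_clinear)

section \<open>Adjoints of isometries\<close>

lemma eq_by_cinner: "(\<And>x. cinner x a = cinner x b) \<Longrightarrow> a = (b::'a::complex_inner)"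
proof -
  assume h: "\<And>x. cinner x a = cinner x b"
  have "cinner (a - b) (a - b) = 0" using h[of "a - b"] by (simp add: cinner_diff_right)
  then show ?thesis by simp
qed

lemma adj_exists:
  fixes V :: "'a::chilbert_space \<Rightarrow> 'a"
  assumes V: "isometry V"
  shows "\<exists>S. \<forall>x y. cinner (V x) y = cinner x (S y)"
proof -
  let ?R = "range V"
  have R: "closed_csubspace ?R" by (rule closed_csubspace_range_isometry[OF V])
  define S where "S y = (SOME s. V s = proj ?R y)" for y
  have S: "V (S y) = proj ?R y" for y
  proof -
    have "proj ?R y \<in> ?R" by (rule proj_in[OF R])
    then have "\<exists>s. V s = proj ?R y" by auto
    then show ?thesis unfolding S_def by (rule someI_ex)
  qed
  have "cinner (V x) y = cinner x (S y)" for x y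
  proof -
    have "cinner (V x) (y - proj ?R y) = 0" by (rule proj_orth[OF R]) simp
    then have "cinner (V x) y = cinner (V x) (proj ?R y)" by (simp add: cinner_diff_right)
    also have "\<dots> = cinner (V x) (V (S y))" by (simp add: S)
    also have "\<dots> = cinner x (S y)" by (rule isometry_cinner[OF V])
    finally show ?thesis .
  qed
  then show ?thesis by blast
qed

lemma adj_prop:
  fixes V :: "'a::chilbert_space \<Rightarrow> 'a"
  assumes V: "isometry V" shows "cinner (V x) y = cinner x (adj V y)"
proof -
  have "\<forall>x y. cinner (V x) y = cinner x (adj V y)"
    unfolding adj_def by (rule someI_ex[OF adj_exists[OF V]])
  then show ?thesis by blast
qed

lemma adj_prop2:
  fixes V :: "'a::chilbert_space \<Rightarrow> 'a"
  assumes V: "isometry V" shows "cinner y (V x) = cinner (adj V y) x"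
  by (metis adj_prop[OF V] cinner_cnj)

lemma adj_char:
  fixes V :: "'a::chilbert_space \<Rightarrow> 'a"
  assumes V: "isometry V" and h: "\<And>x. cinner (V x) y = cinner x w"
  shows "adj V y = w"
  by (rule eq_by_cinner) (metis adj_prop[OF V] h)

lemma adj_iso:
  fixes V :: "'a::chilbert_space \<Rightarrow> 'a"
  assumes V: "isometry V" shows "adj V (V x) = x"
  by (rule adj_char[OF V]) (rule isometry_cinner[OF V])

lemma clinear_adj:
  fixes V :: "'a::chilbert_space \<Rightarrow> 'a"
  assumes V: "isometry V" shows "clinear (adj V)"
  unfolding clinear_def
proof (intro conjI allI)
  show "adj V (x + y) = adj V x + adj V y" for x y
    by (rule adj_char[OF V]) (simp add: cinner_add_right adj_prop[OF V])
  show "adj V (c *\<^sub>C x) = c *\<^sub>C adj V x" for c x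
    by (rule adj_char[OF V]) (simp add: cinner_scaleC_right adj_prop[OF V])
qed

lemma ker_adj_iff:
  fixes V :: "'a::chilbert_space \<Rightarrow> 'a"
  assumes V: "isometry V" shows "y \<in> ker (adj V) \<longleftrightarrow> (\<forall>x. cinner (V x) y = 0)"
proof
  assume "y \<in> ker (adj V)"
  then show "\<forall>x. cinner (V x) y = 0" by (simp add: ker_def adj_prop[OF V])
next
  assume "\<forall>x. cinner (V x) y = 0"
  then have "adj V y = 0" by (intro adj_char[OF V]) simp
  then show "y \<in> ker (adj V)" by (simp add: ker_def)
qed

section \<open>Wold decomposition for a single isometry\<close>

context
  fixes V :: "'a::chilbert_space \<Rightarrow> 'a"
  assumes V: "isometry V"
begin

lemma Vlin: "clinear V" by (rule isometry_clinear[OF V])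

lemma Vk: "isometry (V ^^ k)" by (rule isometry_funpow[OF V])

lemma funpow_Suc_app: "(V ^^ Suc k) y = (V ^^ k) (V y)"
  by (simp only: funpow_Suc_right comp_apply)

lemma closed_csubspace_Huni: "closed_csubspace (Huni V)"
  unfolding Huni_def by (intro closed_csubspace_Inter closed_csubspace_range_isometry Vk)

lemma closed_csubspace_Hiso: "closed_csubspace (Hiso V)"
  unfolding Hiso_def by (rule closed_csubspace_ccspan)

lemma Huni_sub_orth_Hiso: "Huni V \<subseteq> orth (Hiso V)"
proof
  fix x assume x: "x \<in> Huni V"
  have "x \<in> orth (\<Union>k. (V ^^ k) ` ker (adj V))"
    unfolding orth_def
  proof (safe)
    fix k w assume w: "w \<in> ker (adj V)"
    have "x \<in> range (V ^^ Suc k)" using x unfolding Huni_def by blast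
    then obtain y where y: "x = (V ^^ Suc k) y" by blast
    have "cinner ((V ^^ k) w) x = cinner ((V ^^ k) w) ((V ^^ k) (V y))" by (simp only: y funpow_Suc_app)
    also have "\<dots> = cinner w (V y)" by (rule isometry_cinner[OF Vk])
    also have "\<dots> = cnj (cinner (V y) w)" by (simp add: cinner_cnj)
    also have "cinner (V y) w = 0" using w ker_adj_iff[OF V] by blast
    finally show "cinner ((V ^^ k) w) x = 0" by simp
  qed
  then have "\<forall>m \<in> Hiso V. cinner m x = 0" unfolding Hiso_def using orth_ccspan by blast
  then show "x \<in> orth (Hiso V)" by (simp add: orth_def)
qed

lemma orth_in_range: "y \<in> orth (ker (adj V)) \<Longrightarrow> y \<in> range V"
proof -
  assume y: "y \<in> orth (ker (adj V))"
  have R: "closed_csubspace (range V)" by (rule closed_csubspace_range_isometry[OF V])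
  have "range V = orth (orth (range V))" using orth_orth[OF R] by simp
  moreover have "orth (range V) = ker (adj V)"
    using ker_adj_iff[OF V] by (auto simp: orth_def)
  ultimately show ?thesis using y by simp
qed

lemma orth_Hiso_sub_Huni: "orth (Hiso V) \<subseteq> Huni V"
proof
  fix x assume x: "x \<in> orth (Hiso V)"
  have xo: "cinner ((V ^^ k) w) x = 0" if "w \<in> ker (adj V)" for k w
  proof -
    have "(V ^^ k) w \<in> (\<Union>k. (V ^^ k) ` ker (adj V))" using that by blast
    then have "(V ^^ k) w \<in> Hiso V" unfolding Hiso_def using ccspan_superset by (rule subsetD[rotated])
    then show ?thesis using x by (simp add: orth_def)
  qed
  have "x \<in> range (V ^^ k)" for k
  proof (induction k)
    case 0 then show ?case by simp
  next
    case (Suc k)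
    then obtain y where y: "x = (V ^^ k) y" by blast
    have "y \<in> orth (ker (adj V))"
      unfolding orth_def
    proof safe
      fix w assume w: "w \<in> ker (adj V)"
      have "cinner w y = cinner ((V ^^ k) w) ((V ^^ k) y)" by (simp add: isometry_cinner[OF Vk])
      also have "\<dots> = 0" using xo[OF w] y by simp
      finally show "cinner w y = 0" .
    qed
    then obtain u where "y = V u" using orth_in_range by blast
    then have "x = (V ^^ Suc k) u" by (simp only: y funpow_Suc_app)
    then show ?case by blast
  qed
  then show "x \<in> Huni V" by (simp add: Huni_def)
qed

lemma Huni_eq_orth_Hiso: "Huni V = orth (Hiso V)"
  using Huni_sub_orth_Hiso orth_Hiso_sub_Huni by blast

lemma Hiso_eq_orth_Huni: "Hiso V = orth (Huni V)"
  using orth_orth[OF closed_csubspace_Hiso] Huni_eq_orth_Hiso by simp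

lemma proj_Hiso: "proj (Hiso V) x = x - proj (Huni V) x"
  using proj_orth_complement[OF closed_csubspace_Huni] Hiso_eq_orth_Huni by simp

lemma Huni_Hiso_zero: "x \<in> Huni V \<Longrightarrow> x \<in> Hiso V \<Longrightarrow> x = 0"
  using orth_inter_zero Huni_eq_orth_Hiso by blast

lemma Huni_sub_range: "Huni V \<subseteq> range V"
proof
  fix x assume "x \<in> Huni V"
  then have "x \<in> range (V ^^ 1)" by (simp only: Huni_def) blast
  then show "x \<in> range V" by simp
qed

lemma funpow_commute_const:
  assumes T: "clinear T" and TV: "\<And>y. T (V y) = V (c *\<^sub>C T y)"
  shows "T ((V ^^ k) y) = (V ^^ k) ((c ^ k) *\<^sub>C T y)"
proof (induction k)
  case 0 then show ?case by simp
next
  case (Suc k)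
  have "T ((V ^^ Suc k) y) = T (V ((V ^^ k) y))" by simp
  also have "\<dots> = V (c *\<^sub>C T ((V ^^ k) y))" by (rule TV)
  also have "\<dots> = V (c *\<^sub>C (V ^^ k) ((c ^ k) *\<^sub>C T y))" by (simp add: Suc)
  also have "c *\<^sub>C (V ^^ k) ((c ^ k) *\<^sub>C T y) = (V ^^ k) ((c ^ Suc k) *\<^sub>C T y)"
    by (simp add: clinear_scaleC[OF isometry_clinear[OF Vk]] scaleC_scaleC)
  finally show ?case by simp
qed

lemma Huni_invariant:
  assumes T: "clinear T" and TV: "\<And>y. T (V y) = V (c *\<^sub>C T y)" and x: "x \<in> Huni V"
  shows "T x \<in> Huni V"
  unfolding Huni_def
proof safe
  fix k
  have "x \<in> range (V ^^ k)" using x unfolding Huni_def by blast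
    then obtain y where "x = (V ^^ k) y" by blast
  then have "T x = (V ^^ k) ((c ^ k) *\<^sub>C T y)" using funpow_commute_const[OF T TV] by simp
  then show "T x \<in> range (V ^^ k)" by simp
qed

lemma reduces_Huni_self: "reduces (Huni V) V"
  unfolding reduces_def
proof safe
  fix x assume x: "x \<in> Huni V"
  show "V x \<in> Huni V"
    unfolding Huni_def
  proof safe
    fix k
    have "x \<in> range (V ^^ k)" using x unfolding Huni_def by blast
    then obtain y where "x = (V ^^ k) y" by blast
    then have "V x = (V ^^ k) (V y)" by (simp only: funpow_Suc_app[symmetric] funpow.simps comp_apply)
    then show "V x \<in> range (V ^^ k)" by simp
  qed
  show "adj V x \<in> Huni V"
    unfolding Huni_def
  proof safe
    fix k
    have "x \<in> range (V ^^ Suc k)" using x unfolding Huni_def by blast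
    then obtain y where "x = (V ^^ Suc k) y" by blast
    then have "adj V x = (V ^^ k) y" by (simp add: adj_iso[OF V])
    then show "adj V x \<in> range (V ^^ k)" by simp
  qed
qed

lemma unitary_imp_Huni: "V ` L = L \<Longrightarrow> L \<subseteq> Huni V"
proof -
  assume h: "V ` L = L"
  have "L \<subseteq> range (V ^^ k)" for k
  proof (induction k)
    case 0 then show ?case by simp
  next
    case (Suc k)
    have "L = V ` L" using h by simp
    also have "\<dots> \<subseteq> V ` range (V ^^ k)" using Suc by blast
    also have "\<dots> \<subseteq> range (V ^^ Suc k)" by auto
    finally show ?case .
  qed
  then show ?thesis by (auto simp: Huni_def)
qed

lemma pure_lemma: "V ` L \<subseteq> L \<Longrightarrow> L \<subseteq> Hiso V \<Longrightarrow> pure_on V L"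
  unfolding pure_on_def
proof safe
  fix M x assume L: "L \<subseteq> Hiso V" and M: "closed_csubspace M" "M \<subseteq> L" "unitary_on V M" and x: "x \<in> M"
  have "M \<subseteq> Huni V" using M(3) unitary_imp_Huni by (simp add: unitary_on_def)
  then show "x = 0" using Huni_Hiso_zero x M(2) L by blast
next
  fix M assume "closed_csubspace M"
  then show "0 \<in> M" by (simp add: closed_csubspace_def csubspace_def)
qed

lemma unitary_lemma: "reduces L V \<Longrightarrow> L \<subseteq> Huni V \<Longrightarrow> unitary_on V L"
  unfolding unitary_on_def
proof
  assume r: "reduces L V" and L: "L \<subseteq> Huni V"
  show "V ` L \<subseteq> L" using r by (simp add: reduces_def)
  show "L \<subseteq> V ` L"
  proof
    fix x assume x: "x \<in> L"
    then obtain y where y: "x = V y" using L Huni_sub_range by blast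
    have "adj V x = y" by (simp add: y adj_iso[OF V])
    moreover have "adj V x \<in> L" using r x by (auto simp: reduces_def)
    ultimately show "x \<in> V ` L" using y by blast
  qed
qed

lemma orth_reduces: "reduces M V \<Longrightarrow> reduces (orth M) V"
  unfolding reduces_def
proof safe
  fix y assume r1: "V ` M \<subseteq> M" and r2: "adj V ` M \<subseteq> M" and y: "y \<in> orth M"
  show "V y \<in> orth M" unfolding orth_def
  proof safe
    fix m assume m: "m \<in> M"
    have "cinner m (V y) = cinner (adj V m) y" by (rule adj_prop2[OF V])
    then show "cinner m (V y) = 0" using y r2 m by (auto simp: orth_def)
  qed
  show "adj V y \<in> orth M" unfolding orth_def
  proof safe
    fix m assume m: "m \<in> M"
    have "cinner m (adj V y) = cinner (V m) y" by (simp add: adj_prop[OF V])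
    then show "cinner m (adj V y) = 0" using y r1 m by (auto simp: orth_def)
  qed
qed

lemma reduces_proj_commute:
  assumes M: "closed_csubspace M" and r: "reduces M V"
  shows "proj M (V x) = V (proj M x)" and "proj M (adj V x) = adj V (proj M x)"
proof -
  have ro: "reduces (orth M) V" by (rule orth_reduces[OF r])
  have x: "x = proj M x + (x - proj M x)" by simp
  have o: "x - proj M x \<in> orth M" by (rule proj_orth_in[OF M])
  have "V x = V (proj M x) + V (x - proj M x)" by (simp add: clinear_add[OF Vlin, symmetric])
  then have "proj M (V x) = proj M (V (proj M x)) + proj M (V (x - proj M x))"
    by (simp add: proj_add[OF M])
  also have "proj M (V (proj M x)) = V (proj M x)"
    using r proj_in[OF M] by (intro proj_fixed[OF M]) (auto simp: reduces_def)
  also have "proj M (V (x - proj M x)) = 0"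
    using ro o by (intro proj_orth_zero[OF M]) (auto simp: reduces_def)
  finally show "proj M (V x) = V (proj M x)" by simp
  have "adj V x = adj V (proj M x) + adj V (x - proj M x)"
    by (simp add: clinear_add[OF clinear_adj[OF V], symmetric])
  then have "proj M (adj V x) = proj M (adj V (proj M x)) + proj M (adj V (x - proj M x))"
    by (simp add: proj_add[OF M])
  also have "proj M (adj V (proj M x)) = adj V (proj M x)"
    using r proj_in[OF M] by (intro proj_fixed[OF M]) (auto simp: reduces_def)
  also have "proj M (adj V (x - proj M x)) = 0"
    using ro o by (intro proj_orth_zero[OF M]) (auto simp: reduces_def)
  finally show "proj M (adj V x) = adj V (proj M x)" by simp
qed

end

lemma proj_orth_invariant:
  fixes M N :: "'a::chilbert_space set"
  assumes N: "closed_csubspace N" and inv: "\<And>m. m \<in> M \<Longrightarrow> proj N m \<in> M" and y: "y \<in> orth M"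
  shows "proj N y \<in> orth M"
proof -
  have "cinner m (proj N y) = 0" if m: "m \<in> M" for m
  proof -
    have "cinner m (proj N y) = cinner (proj N m) y" by (simp add: proj_selfadj[OF N])
    also have "\<dots> = 0" using y inv[OF m] by (simp add: orth_def)
    finally show ?thesis .
  qed
  then show ?thesis by (simp add: orth_def)
qed

lemma proj_Int_commuting:
  fixes M N :: "'a::chilbert_space set"
  assumes M: "closed_csubspace M" and N: "closed_csubspace N" and inv: "\<And>m. m \<in> N \<Longrightarrow> proj M m \<in> N"
  shows "proj M (proj N x) = proj (M \<inter> N) x"
proof -
  have MN: "closed_csubspace (M \<inter> N)" by (rule closed_csubspace_Int[OF M N])
  have c: "proj N (proj M x) = proj M (proj N x)" by (rule proj_commute_if_invariant[OF N M inv])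
  show ?thesis
  proof (rule proj_unique[OF MN, symmetric])
    have "proj M (proj N x) \<in> M" by (rule proj_in[OF M])
    moreover have "proj M (proj N x) \<in> N" unfolding c[symmetric] by (rule proj_in[OF N])
    ultimately show "proj M (proj N x) \<in> M \<inter> N" by blast
    show "\<forall>m\<in>M \<inter> N. cinner m (x - proj M (proj N x)) = 0"
    proof
      fix m assume m: "m \<in> M \<inter> N"
      have e: "x - proj M (proj N x) = (x - proj N x) + (proj N x - proj M (proj N x))" by simp
      show "cinner m (x - proj M (proj N x)) = 0"
        unfolding e cinner_add_right using proj_orth[OF N, of m x] proj_orth[OF M, of m "proj N x"] m by simp
    qed
  qed
qed

lemma foldr_proj:
  fixes Mf :: "nat \<Rightarrow> 'a::chilbert_space set"
  assumes cl: "\<And>i. i \<in> set is \<Longrightarrow> closed_csubspace (Mf i)"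
    and inv: "\<And>i j y. i \<in> set is \<Longrightarrow> j \<in> set is \<Longrightarrow> y \<in> Mf j \<Longrightarrow> proj (Mf i) y \<in> Mf j"
  shows "foldr (\<circ>) (map (\<lambda>i. proj (Mf i)) is) id = proj (\<Inter>i\<in>set is. Mf i)"
  using cl inv
proof (induction "is")
  case Nil
  show ?case by (simp add: fun_eq_iff proj_UNIV)
next
  case (Cons k "is")
  let ?N = "\<Inter>i\<in>set is. Mf i"
  have IH: "foldr (\<circ>) (map (\<lambda>i. proj (Mf i)) is) id = proj ?N"
    using Cons.prems by (intro Cons.IH) auto
  have Mk: "closed_csubspace (Mf k)" using Cons.prems by simp
  have N: "closed_csubspace ?N" using Cons.prems by (intro closed_csubspace_Inter) auto
  have invN: "proj (Mf k) m \<in> ?N" if "m \<in> ?N" for m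
    using that Cons.prems(2)[of k] by auto
  have e2: "proj (Mf k) \<circ> proj ?N = proj (Mf k \<inter> ?N)"
    by (rule ext) (simp only: comp_apply proj_Int_commuting[OF Mk N invN])
  have e3: "(\<Inter>i\<in>set (k # is). Mf i) = Mf k \<inter> ?N" by simp
  have e1: "foldr (\<circ>) (map (\<lambda>i. proj (Mf i)) (k # is)) id = proj (Mf k) \<circ> proj ?N"
    using IH by simp
  show ?case by (simp only: e1 e2 e3)
qed

lemma span_all:
  fixes Pa Pb :: "nat \<Rightarrow> 'a::complex_vector \<Rightarrow> 'a"
  assumes d: "distinct is"
    and la: "\<And>i. i \<in> set is \<Longrightarrow> clinear (Pa i)" and lb: "\<And>i. i \<in> set is \<Longrightarrow> clinear (Pb i)"
    and ia: "\<And>i x. i \<in> set is \<Longrightarrow> Pa i (Pa i x) = Pa i x" and ib: "\<And>i x. i \<in> set is \<Longrightarrow> Pb i (Pb i x) = Pb i x"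
    and s: "\<And>i x. i \<in> set is \<Longrightarrow> Pa i x + Pb i x = x"
  shows "x \<in> cspan (\<Union>A\<in>Pow (set is). range (foldr (\<circ>) (map (\<lambda>i. if i \<in> A then Pa i else Pb i) is) id))"
  using assms
proof (induction "is" arbitrary: x)
  case Nil
  have "x \<in> range (foldr (\<circ>) (map (\<lambda>i. if i \<in> {} then Pa i else Pb i) []) id)" by simp
  then show ?case using cspan_superset by fastforce
next
  case (Cons k "is")
  define G where "G js A = foldr (\<circ>) (map (\<lambda>i. if i \<in> A then Pa i else Pb i) js) id" for js A
  define S where "S = (\<Union>A\<in>Pow (set is). range (G is A))"
  define S' where "S' = (\<Union>A\<in>Pow (set (k # is)). range (G (k # is) A))"
  have k: "k \<notin> set is" and d': "distinct is" using Cons.prems by auto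
  have la: "clinear (Pa k)" and lb: "clinear (Pb k)" and ia: "Pa k (Pa k y) = Pa k y"
    and ib: "Pb k (Pb k y) = Pb k y" and s: "Pa k y + Pb k y = y" for y
    using Cons.prems by auto
  have IH: "y \<in> cspan S" for y
  proof -
    have "y \<in> cspan (\<Union>A\<in>Pow (set is). range (foldr (\<circ>) (map (\<lambda>i. if i \<in> A then Pa i else Pb i) is) id))"
      by (rule Cons.IH) (use Cons.prems in auto)
    then show ?thesis unfolding S_def G_def .
  qed
  have Gcong: "G is A = G is B" if "\<And>i. i \<in> set is \<Longrightarrow> (i \<in> A \<longleftrightarrow> i \<in> B)" for A B
  proof -
    have "map (\<lambda>i. if i \<in> A then Pa i else Pb i) is = map (\<lambda>i. if i \<in> B then Pa i else Pb i) is"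
      using that by (intro map_cong) auto
    then show ?thesis unfolding G_def by (rule arg_cong[where f="\<lambda>l. foldr (\<circ>) l id"])
  qed
  have a: "Pa k ` S \<subseteq> S'"
  proof
    fix u assume "u \<in> Pa k ` S"
    then obtain A y where A: "A \<subseteq> set is" and u: "u = Pa k (G is A y)" unfolding S_def by blast
    have "G is (insert k A) = G is A" using k by (intro Gcong) auto
    then have "u = G (k # is) (insert k A) y" using u by (simp add: G_def)
    moreover have "insert k A \<in> Pow (set (k # is))" using A by auto
    ultimately show "u \<in> S'" unfolding S'_def by blast
  qed
  have b: "Pb k ` S \<subseteq> S'"
  proof
    fix u assume "u \<in> Pb k ` S"
    then obtain A y where A: "A \<subseteq> set is" and u: "u = Pb k (G is A y)" unfolding S_def by blast
    have "k \<notin> A" using A k by blast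
    then have "u = G (k # is) A y" using u by (simp add: G_def)
    moreover have "A \<in> Pow (set (k # is))" using A by auto
    ultimately show "u \<in> S'" unfolding S'_def by blast
  qed
  have "Pa k (Pa k x) \<in> Pa k ` cspan S" using IH by blast
  also have "\<dots> \<subseteq> cspan (Pa k ` S)" by (rule clinear_image_cspan[OF la])
  also have "\<dots> \<subseteq> cspan S'" by (rule cspan_mono[OF a])
  finally have 1: "Pa k x \<in> cspan S'" by (simp only: ia)
  have "Pb k (Pb k x) \<in> Pb k ` cspan S" using IH by blast
  also have "\<dots> \<subseteq> cspan (Pb k ` S)" by (rule clinear_image_cspan[OF lb])
  also have "\<dots> \<subseteq> cspan S'" by (rule cspan_mono[OF b])
  finally have 2: "Pb k x \<in> cspan S'" by (simp only: ib)
  have "Pa k x + Pb k x \<in> cspan S'" by (rule csubspace_add[OF csubspace_cspan 1 2])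
  then have "x \<in> cspan S'" using s[of x] by simp
  then show ?case unfolding S'_def G_def .
qed

lemma reduces_Inter: "(\<And>j. j \<in> J \<Longrightarrow> reduces (M j) T) \<Longrightarrow> reduces (\<Inter>j\<in>J. M j) T"
  unfolding reduces_def by blast

lemma pure_imp_Hiso:
  fixes V :: "'a::chilbert_space \<Rightarrow> 'a"
  assumes V: "isometry V" and L: "closed_csubspace L" and r: "reduces L V" and p: "pure_on V L"
  shows "L \<subseteq> Hiso V"
proof
  fix x assume x: "x \<in> L"
  define M where "M = L \<inter> Huni V"
  have Mc: "closed_csubspace M" unfolding M_def by (rule closed_csubspace_Int[OF L closed_csubspace_Huni[OF V]])
  have rM: "reduces M V" unfolding M_def using r reduces_Huni_self[OF V] by (auto simp: reduces_def)
  have uM: "unitary_on V M" by (rule unitary_lemma[OF V rM]) (simp add: M_def)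
  have M0: "M = {0}" using p Mc rM uM by (auto simp: pure_on_def reduces_def M_def)
  have cV: "proj L (V y) = V (1 *\<^sub>C proj L y)" for y using reduces_proj_commute(1)[OF V L r] by simp
  have inv: "proj L m \<in> Huni V" if "m \<in> Huni V" for m
    by (rule Huni_invariant[OF V clinear_proj[OF L] cV that])
  have "proj (Huni V) (proj L x) = proj L (proj (Huni V) x)"
    by (rule proj_commute_if_invariant[OF closed_csubspace_Huni[OF V] L inv])
  then have "proj (Huni V) x = proj L (proj (Huni V) x)" using proj_fixed[OF L x] by simp
  then have "proj (Huni V) x \<in> L" using proj_in[OF L] by metis
  moreover have "proj (Huni V) x \<in> Huni V" by (rule proj_in[OF closed_csubspace_Huni[OF V]])
  ultimately have "proj (Huni V) x = 0" using M0 by (auto simp: M_def)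
  then have "proj (Hiso V) x = x" by (simp add: proj_Hiso[OF V])
  then show "x \<in> Hiso V" using proj_in[OF closed_csubspace_Hiso[OF V], of x] by simp
qed

context
  fixes n :: nat and z :: "nat \<Rightarrow> nat \<Rightarrow> complex" and V :: "nat \<Rightarrow> 'a::chilbert_space \<Rightarrow> 'a"
  assumes z_circle: "\<forall>i\<in>{1..n}. \<forall>j\<in>{1..n}. i \<noteq> j \<longrightarrow> cmod (z i j) = 1"
    and z_sym: "\<forall>i\<in>{1..n}. \<forall>j\<in>{1..n}. i \<noteq> j \<longrightarrow> z j i = cnj (z i j)"
    and dnc: "doubly_noncommuting n z V"
begin

lemma iso: "i \<in> {1..n} \<Longrightarrow> isometry (V i)"
  using dnc by (simp add: doubly_noncommuting_def)

lemma rel: "i \<in> {1..n} \<Longrightarrow> j \<in> {1..n} \<Longrightarrow> i \<noteq> j \<Longrightarrow> adj (V i) (V j x) = cnj (z i j) *\<^sub>C V j (adj (V i) x)"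
  using dnc by (simp add: doubly_noncommuting_def)

lemma commute:
  assumes i: "i \<in> {1..n}" and j: "j \<in> {1..n}" and ij: "i \<noteq> j"
  shows "V i (V j x) = z i j *\<^sub>C V j (V i x)"
proof -
  define c where "c = z i j"
  have "cmod c = 1" using z_circle i j ij by (simp add: c_def)
  then have cc: "c * cnj c = 1" using complex_norm_square[of c] by simp
  have "z j i = cnj (z i j)" using z_sym i j ij by blast
  then have zji: "cnj (z j i) = c" by (simp add: c_def)
  have Vi: "isometry (V i)" and Vj: "isometry (V j)" using iso i j by auto
  define D where "D = c *\<^sub>C V j (V i x) - V i (V j x)"
  have a1: "adj (V i) (V j (V i x)) = cnj c *\<^sub>C V j x"
    using rel[OF i j ij, of "V i x"] adj_iso[OF Vi] by (simp add: c_def)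
  have "adj (V i) D = c *\<^sub>C adj (V i) (V j (V i x)) - adj (V i) (V i (V j x))"
    unfolding D_def by (simp add: clinear_diff[OF clinear_adj[OF Vi]] clinear_scaleC[OF clinear_adj[OF Vi]])
  also have "\<dots> = (c * cnj c) *\<^sub>C V j x - V j x" by (simp add: a1 adj_iso[OF Vi] scaleC_scaleC)
  finally have Di: "adj (V i) D = 0" using cc by simp
  have a2: "adj (V j) (V i (V j x)) = c *\<^sub>C V i x"
    using rel[OF j i ij[symmetric], of "V j x"] adj_iso[OF Vj] zji by simp
  have "adj (V j) D = c *\<^sub>C adj (V j) (V j (V i x)) - adj (V j) (V i (V j x))"
    unfolding D_def by (simp add: clinear_diff[OF clinear_adj[OF Vj]] clinear_scaleC[OF clinear_adj[OF Vj]])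
  also have "\<dots> = 0" by (simp add: a2 adj_iso[OF Vj])
  finally have Dj: "adj (V j) D = 0" .
  have "cinner D D = c * cinner D (V j (V i x)) - cinner D (V i (V j x))"
    by (subst (2) D_def) (simp add: cinner_diff_right cinner_scaleC_right)
  also have "cinner D (V j (V i x)) = 0" using Dj by (simp add: adj_prop2[OF Vj])
  also have "cinner D (V i (V j x)) = 0" using Di by (simp add: adj_prop2[OF Vi])
  finally have "D = 0" by simp
  then show ?thesis by (simp add: D_def c_def)
qed

lemma Huni_red:
  assumes i: "i \<in> {1..n}" and j: "j \<in> {1..n}"
  shows "reduces (Huni (V i)) (V j)"
proof (cases "i = j")
  case True then show ?thesis using reduces_Huni_self[OF iso[OF j]] by simp
next
  case False
  have Vi: "isometry (V i)" and Vj: "isometry (V j)" using iso i j by auto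
  have TV1: "V j (V i y) = V i (z j i *\<^sub>C V j y)" for y
    using commute[OF j i, of y] False clinear_scaleC[OF isometry_clinear[OF Vi]] by simp
  have TV2: "adj (V j) (V i y) = V i (cnj (z j i) *\<^sub>C adj (V j) y)" for y
    using rel[OF j i, of y] False clinear_scaleC[OF isometry_clinear[OF Vi]] by simp
  show ?thesis unfolding reduces_def
    using Huni_invariant[OF Vi isometry_clinear[OF Vj] TV1]
      Huni_invariant[OF Vi clinear_adj[OF Vj] TV2] by blast
qed

lemma Hiso_red:
  assumes i: "i \<in> {1..n}" and j: "j \<in> {1..n}"
  shows "reduces (Hiso (V i)) (V j)"
  using orth_reduces[OF iso[OF j] Huni_red[OF i j]] Hiso_eq_orth_Huni[OF iso[OF i]] by simp

lemma projHuni_inv: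
  assumes i: "i \<in> {1..n}" and j: "j \<in> {1..n}" and y: "y \<in> Huni (V j)"
  shows "proj (Huni (V i)) y \<in> Huni (V j)"
proof -
  have Vi: "isometry (V i)" and Vj: "isometry (V j)" using iso i j by auto
  have TV: "proj (Huni (V i)) (V j u) = V j (1 *\<^sub>C proj (Huni (V i)) u)" for u
    using reduces_proj_commute(1)[OF Vj closed_csubspace_Huni[OF Vi] Huni_red[OF i j]] by simp
  show ?thesis by (rule Huni_invariant[OF Vj clinear_proj[OF closed_csubspace_Huni[OF Vi]] TV y])
qed

lemma inv_Huni:
  assumes i: "i \<in> {1..n}" and j: "j \<in> {1..n}" and X: "X \<in> {Hiso (V i), Huni (V i)}" and y: "y \<in> Huni (V j)"
  shows "proj X y \<in> Huni (V j)"
proof -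
  have Vi: "isometry (V i)" and Vj: "isometry (V j)" using iso i j by auto
  have 1: "proj (Huni (V i)) y \<in> Huni (V j)" by (rule projHuni_inv[OF i j y])
  show ?thesis
  proof (cases "X = Huni (V i)")
    case True then show ?thesis using 1 by simp
  next
    case False
    then have "X = Hiso (V i)" using X by blast
    then have "proj X y = y - proj (Huni (V i)) y" by (simp add: proj_Hiso[OF Vi])
    then show ?thesis using csubspace_diff[OF closed_csubspace_csubspace[OF closed_csubspace_Huni[OF Vj]] y 1] by simp
  qed
qed

lemma closed_X: "i \<in> {1..n} \<Longrightarrow> X \<in> {Hiso (V i), Huni (V i)} \<Longrightarrow> closed_csubspace X"
  using closed_csubspace_Hiso[OF iso] closed_csubspace_Huni[OF iso] by blast

lemma inv_all:
  assumes i: "i \<in> {1..n}" and j: "j \<in> {1..n}" and X: "X \<in> {Hiso (V i), Huni (V i)}"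
    and Y: "Y \<in> {Hiso (V j), Huni (V j)}" and y: "y \<in> Y"
  shows "proj X y \<in> Y"
proof (cases "Y = Huni (V j)")
  case True then show ?thesis using inv_Huni[OF i j X] y by simp
next
  case False
  then have Y': "Y = orth (Huni (V j))" using Y Hiso_eq_orth_Huni[OF iso[OF j]] by blast
  show ?thesis unfolding Y'
    by (rule proj_orth_invariant[OF closed_X[OF i X] inv_Huni[OF i j X]]) (use y Y' in auto)
qed

definition MA :: "nat set \<Rightarrow> nat \<Rightarrow> 'a set" where
  "MA A i = (if i \<in> A then Hiso (V i) else Huni (V i))"

definition HA :: "nat set \<Rightarrow> 'a set" where
  "HA A = (\<Inter>i\<in>{1..n}. MA A i)"

lemma MA_in: "MA A i \<in> {Hiso (V i), Huni (V i)}" by (simp add: MA_def)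

lemma closed_HA: "closed_csubspace (HA A)"
  unfolding HA_def by (intro closed_csubspace_Inter closed_X[OF _ MA_in]) auto

lemma P_set_eq: "P_set n V A = proj (HA A)"
proof -
  have e: "(\<lambda>i. if i \<in> A then proj (Hiso (V i)) else proj (Huni (V i))) = (\<lambda>i. proj (MA A i))"
    by (rule ext) (simp add: MA_def)
  have s: "set [1..<Suc n] = {1..n}" by auto
  have "P_set n V A = foldr (\<circ>) (map (\<lambda>i. proj (MA A i)) [1..<Suc n]) id"
    unfolding P_set_def e ..
  also have "\<dots> = proj (\<Inter>i\<in>set [1..<Suc n]. MA A i)"
    by (rule foldr_proj) (auto intro: closed_X[OF _ MA_in] inv_all[OF _ _ MA_in MA_in])
  finally show ?thesis unfolding s HA_def .
qed

lemma H_set_eq: "H_set n V A = HA A"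
  unfolding H_set_def P_set_eq by (rule range_proj[OF closed_HA])

lemma sub_MA: "i \<in> {1..n} \<Longrightarrow> H_set n V A \<subseteq> MA A i"
  unfolding H_set_eq HA_def by blast

lemma sub_iso: "i \<in> A \<Longrightarrow> i \<in> {1..n} \<Longrightarrow> H_set n V A \<subseteq> Hiso (V i)"
  using sub_MA[of i A] by (simp add: MA_def)

lemma sub_uni: "i \<notin> A \<Longrightarrow> i \<in> {1..n} \<Longrightarrow> H_set n V A \<subseteq> Huni (V i)"
  using sub_MA[of i A] by (simp add: MA_def)

lemma red_H: "i \<in> {1..n} \<Longrightarrow> reduces (H_set n V A) (V i)"
  unfolding H_set_eq HA_def
  by (rule reduces_Inter) (simp add: MA_def Hiso_red Huni_red)

lemma main:
  shows
    "(\<forall>A\<subseteq>{1..n}. H_set n V A = (\<Inter>i\<in>A. Hiso (V i)) \<inter> (\<Inter>i\<in>{1..n} - A. Huni (V i)))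
     \<and> (\<forall>A\<subseteq>{1..n}. \<forall>B\<subseteq>{1..n}. A \<noteq> B \<longrightarrow> orthogonal_sets (H_set n V A) (H_set n V B))
     \<and> ccspan (\<Union>A\<in>Pow {1..n}. H_set n V A) = UNIV
     \<and> (\<forall>A\<subseteq>{1..n}. \<forall>i\<in>{1..n}. reduces (H_set n V A) (V i))
     \<and> (\<forall>A\<subseteq>{1..n}. \<forall>i\<in>{1..n}.
          (i \<in> A \<longrightarrow> pure_on (V i) (H_set n V A)) \<and> (i \<notin> A \<longrightarrow> unitary_on (V i) (H_set n V A)))
     \<and> (\<forall>L A. closed_csubspace L \<and> (\<forall>i\<in>{1..n}. reduces L (V i)) \<and> A \<subseteq> {1..n} \<longrightarrow>
          (((\<forall>i\<in>A. pure_on (V i) L) \<and> (\<forall>i\<in>{1..n} - A. unitary_on (V i) L))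
             \<longleftrightarrow> L \<subseteq> H_set n V A)
          \<and> (L \<subseteq> H_set n V A \<longleftrightarrow> proj L \<circ> P_set n V A = proj L))"
proof -
  have p1: "\<forall>A\<subseteq>{1..n}. H_set n V A = (\<Inter>i\<in>A. Hiso (V i)) \<inter> (\<Inter>i\<in>{1..n} - A. Huni (V i))"
  proof (intro allI impI)
    fix A :: "nat set" assume A: "A \<subseteq> {1..n}"
    show "H_set n V A = (\<Inter>i\<in>A. Hiso (V i)) \<inter> (\<Inter>i\<in>{1..n} - A. Huni (V i))"
      unfolding H_set_eq HA_def MA_def using A by (auto split: if_splits)
  qed
  have p2: "\<forall>A\<subseteq>{1..n}. \<forall>B\<subseteq>{1..n}. A \<noteq> B \<longrightarrow> orthogonal_sets (H_set n V A) (H_set n V B)"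
  proof (intro allI impI)
    fix A B :: "nat set" assume A: "A \<subseteq> {1..n}" and B: "B \<subseteq> {1..n}" and AB: "A \<noteq> B"
    then obtain i where i: "(i \<in> A) \<noteq> (i \<in> B)" by blast
    then have iI: "i \<in> {1..n}" using A B by blast
    show "orthogonal_sets (H_set n V A) (H_set n V B)"
      unfolding orthogonal_sets_def
    proof (intro ballI)
      fix x y assume x: "x \<in> H_set n V A" and y: "y \<in> H_set n V B"
      show "cinner x y = 0"
      proof (cases "i \<in> A")
        case True
        then have "i \<notin> B" using i by simp
        then have "y \<in> orth (Hiso (V i))" using sub_uni[OF _ iI] y Huni_eq_orth_Hiso[OF iso[OF iI]] by blast
        moreover have "x \<in> Hiso (V i)" using sub_iso[OF True iI] x by blast
        ultimately show ?thesis by (simp add: orth_def)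
      next
        case False
        then have "i \<in> B" using i by simp
        then have "y \<in> orth (Huni (V i))" using sub_iso[OF _ iI] y Hiso_eq_orth_Huni[OF iso[OF iI]] by blast
        moreover have "x \<in> Huni (V i)" using sub_uni[OF False iI] x by blast
        ultimately show ?thesis by (simp add: orth_def)
      qed
    qed
  qed
  have p3: "ccspan (\<Union>A\<in>Pow {1..n}. H_set n V A) = UNIV"
  proof -
    have s: "set [1..<Suc n] = {1..n}" by auto
    have "x \<in> cspan (\<Union>A\<in>Pow (set [1..<Suc n]). range (foldr (\<circ>) (map (\<lambda>i. if i \<in> A then proj (Hiso (V i)) else proj (Huni (V i))) [1..<Suc n]) id))" for x
    proof (rule span_all)
      show "distinct [1..<Suc n]" by simp
      fix i assume i: "i \<in> set [1..<Suc n]"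
      then have iI: "i \<in> {1..n}" by (simp only: s)
      show "clinear (proj (Hiso (V i)))" by (rule clinear_proj[OF closed_csubspace_Hiso[OF iso[OF iI]]])
      show "clinear (proj (Huni (V i)))" by (rule clinear_proj[OF closed_csubspace_Huni[OF iso[OF iI]]])
      show "proj (Hiso (V i)) (proj (Hiso (V i)) y) = proj (Hiso (V i)) y" for y
        by (rule proj_idem[OF closed_csubspace_Hiso[OF iso[OF iI]]])
      show "proj (Huni (V i)) (proj (Huni (V i)) y) = proj (Huni (V i)) y" for y
        by (rule proj_idem[OF closed_csubspace_Huni[OF iso[OF iI]]])
      show "proj (Hiso (V i)) y + proj (Huni (V i)) y = y" for y
        by (simp add: proj_Hiso[OF iso[OF iI]])
    qed
    then have "x \<in> cspan (\<Union>A\<in>Pow {1..n}. H_set n V A)" for x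
      unfolding s H_set_def P_set_def .
    then have "UNIV \<subseteq> ccspan (\<Union>A\<in>Pow {1..n}. H_set n V A)"
      unfolding ccspan_def using closure_subset by blast
    then show ?thesis by blast
  qed
  have p4: "\<forall>A\<subseteq>{1..n}. \<forall>i\<in>{1..n}. reduces (H_set n V A) (V i)"
    using red_H by blast
  have p5: "\<forall>A\<subseteq>{1..n}. \<forall>i\<in>{1..n}.
          (i \<in> A \<longrightarrow> pure_on (V i) (H_set n V A)) \<and> (i \<notin> A \<longrightarrow> unitary_on (V i) (H_set n V A))"
  proof (intro allI impI ballI conjI)
    fix A :: "nat set" and i assume i: "i \<in> {1..n}"
    show "pure_on (V i) (H_set n V A)" if "i \<in> A"
      using pure_lemma[OF iso[OF i] _ sub_iso[OF that i]] red_H[OF i] by (simp add: reduces_def)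
    show "unitary_on (V i) (H_set n V A)" if "i \<notin> A"
      using unitary_lemma[OF iso[OF i] red_H[OF i] sub_uni[OF that i]] .
  qed
  have p6: "\<forall>L A. closed_csubspace L \<and> (\<forall>i\<in>{1..n}. reduces L (V i)) \<and> A \<subseteq> {1..n} \<longrightarrow>
          (((\<forall>i\<in>A. pure_on (V i) L) \<and> (\<forall>i\<in>{1..n} - A. unitary_on (V i) L))
             \<longleftrightarrow> L \<subseteq> H_set n V A)
          \<and> (L \<subseteq> H_set n V A \<longleftrightarrow> proj L \<circ> P_set n V A = proj L)"
  proof (intro allI impI, elim conjE)
    fix L :: "'a set" and A :: "nat set"
    assume L: "closed_csubspace L" and r: "\<forall>i\<in>{1..n}. reduces L (V i)" and A: "A \<subseteq> {1..n}"
    have "((\<forall>i\<in>A. pure_on (V i) L) \<and> (\<forall>i\<in>{1..n} - A. unitary_on (V i) L)) \<longleftrightarrow> L \<subseteq> H_set n V A"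
    proof
      assume h: "(\<forall>i\<in>A. pure_on (V i) L) \<and> (\<forall>i\<in>{1..n} - A. unitary_on (V i) L)"
      have "L \<subseteq> MA A i" if i: "i \<in> {1..n}" for i
      proof (cases "i \<in> A")
        case True
        then have "L \<subseteq> Hiso (V i)" using pure_imp_Hiso[OF iso[OF i] L] r h i by blast
        then show ?thesis using True by (simp add: MA_def)
      next
        case False
        then have "V i ` L = L" using h i by (simp add: unitary_on_def)
        then have "L \<subseteq> Huni (V i)" by (rule unitary_imp_Huni[OF iso[OF i]])
        then show ?thesis using False by (simp add: MA_def)
      qed
      then show "L \<subseteq> H_set n V A" unfolding H_set_eq HA_def by blast
    next
      assume LH: "L \<subseteq> H_set n V A"
      have "pure_on (V i) L" if i: "i \<in> A" for i
      proof -
        have iI: "i \<in> {1..n}" using A i by blast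
        show ?thesis using pure_lemma[OF iso[OF iI] _ order_trans[OF LH sub_iso[OF i iI]]] r iI
          by (simp add: reduces_def)
      qed
      moreover have "unitary_on (V i) L" if i: "i \<in> {1..n} - A" for i
      proof -
        have iI: "i \<in> {1..n}" and iA: "i \<notin> A" using i by auto
        show ?thesis using unitary_lemma[OF iso[OF iI] _ order_trans[OF LH sub_uni[OF iA iI]]] r iI by blast
      qed
      ultimately show "(\<forall>i\<in>A. pure_on (V i) L) \<and> (\<forall>i\<in>{1..n} - A. unitary_on (V i) L)" by blast
    qed
    moreover have "L \<subseteq> H_set n V A \<longleftrightarrow> proj L \<circ> P_set n V A = proj L"
      unfolding H_set_eq P_set_eq by (rule proj_subset_iff[OF L closed_HA])
    ultimately show "(((\<forall>i\<in>A. pure_on (V i) L) \<and> (\<forall>i\<in>{1..n} - A. unitary_on (V i) L))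
             \<longleftrightarrow> L \<subseteq> H_set n V A)
          \<and> (L \<subseteq> H_set n V A \<longleftrightarrow> proj L \<circ> P_set n V A = proj L)" by blast
  qed
  show ?thesis using p1 p2 p3 p4 p5 p6 by blast
qed

end

theorem theorem3p4:
  fixes n :: nat
    and z :: "nat \<Rightarrow> nat \<Rightarrow> complex"
    and V :: "nat \<Rightarrow> 'a::chilbert_space \<Rightarrow> 'a"
  assumes n_pos: "n \<ge> 1"
    and z_circle: "\<forall>i\<in>{1..n}. \<forall>j\<in>{1..n}. i \<noteq> j \<longrightarrow> cmod (z i j) = 1"
    and z_sym: "\<forall>i\<in>{1..n}. \<forall>j\<in>{1..n}. i \<noteq> j \<longrightarrow> z j i = cnj (z i j)"
    and dnc: "doubly_noncommuting n z V"
  shows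
    "(\<forall>A\<subseteq>{1..n}. H_set n V A = (\<Inter>i\<in>A. Hiso (V i)) \<inter> (\<Inter>i\<in>{1..n} - A. Huni (V i)))
     \<and> (\<forall>A\<subseteq>{1..n}. \<forall>B\<subseteq>{1..n}. A \<noteq> B \<longrightarrow> orthogonal_sets (H_set n V A) (H_set n V B))
     \<and> ccspan (\<Union>A\<in>Pow {1..n}. H_set n V A) = UNIV
     \<and> (\<forall>A\<subseteq>{1..n}. \<forall>i\<in>{1..n}. reduces (H_set n V A) (V i))
     \<and> (\<forall>A\<subseteq>{1..n}. \<forall>i\<in>{1..n}.
          (i \<in> A \<longrightarrow> pure_on (V i) (H_set n V A)) \<and> (i \<notin> A \<longrightarrow> unitary_on (V i) (H_set n V A)))
     \<and> (\<forall>L A. closed_csubspace L \<and> (\<forall>i\<in>{1..n}. reduces L (V i)) \<and> A \<subseteq> {1..n} \<longrightarrow>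
          (((\<forall>i\<in>A. pure_on (V i) L) \<and> (\<forall>i\<in>{1..n} - A. unitary_on (V i) L))
             \<longleftrightarrow> L \<subseteq> H_set n V A)
          \<and> (L \<subseteq> H_set n V A \<longleftrightarrow> proj L \<circ> P_set n V A = proj L))"
  using main[OF z_circle z_sym dnc] .

end
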